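(* Let $\Sigma$ be a finite alphabet. A language $L \subseteq \Sigma^*$ belongs to $\mathsf{F}(\mathcal{O}(1))$ if and only if there exists $k \ge 0$ such that $L_n = \{w\in\Sigma^* : \mathrm{last}_n(w)\in L\}$ is $k$-suffix testable for all $n \ge 0$.
   Context: Fix $a\in\Sigma$; $\mathrm{last}_n(a_1\cdots a_m)=a_{m-n+1}\cdots a_m$ if $n\le m$, else $a^{n-m}a_1\cdots a_m$. A fixed-size sliding window algorithm for $L$ is a sequence $(\mathcal{A}_n)_{n\ge0}$ of deterministic (possibly infinite-state) automata with injective encodings of their states into bit strings, $\mathcal{A}_n$ accepting $L_n$; its space complexity at $n$ is the maximal encoding length of a state of $\mathcal{A}_n$. $\mathsf{F}(\mathcal{O}(1))$ is the class of languages having such an algorithm of constant space complexity. $K$ is $k$-suffix testable if for all $x,y\in\Sigma^*$ and $z\in\Sigma^k$: $xz\in K\iff yz\in K$. *)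

theory Defs
  imports Main
begin

text \<open>The alphabet Sigma is the (finite) type 'a; the padding letter a is a parameter.\<close>

definition last_n :: "'a \<Rightarrow> nat \<Rightarrow> 'a list \<Rightarrow> 'a list" where
  "last_n a n w = (if n \<le> length w then drop (length w - n) w
                   else replicate (n - length w) a @ w)"

definition window_lang :: "'a \<Rightarrow> 'a list set \<Rightarrow> nat \<Rightarrow> 'a list set" where
  "window_lang a L n = {w. last_n a n w \<in> L}"

definition suffix_testable :: "nat \<Rightarrow> 'a list set \<Rightarrow> bool" where
  "suffix_testable k K \<longleftrightarrow>
     (\<forall>x y z. length z = k \<longrightarrow> (x @ z \<in> K \<longleftrightarrow> y @ z \<in> K))"

record ('q, 'a) enc_dfa =
  states :: "'q set"
  init   :: 'q
  delta  :: "'q \<Rightarrow> 'a \<Rightarrow> 'q"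
  final  :: "'q set"
  enc    :: "'q \<Rightarrow> bool list"

definition wf_enc_dfa :: "('q, 'a) enc_dfa \<Rightarrow> bool" where
  "wf_enc_dfa A \<longleftrightarrow> init A \<in> states A
     \<and> (\<forall>q\<in>states A. \<forall>x. delta A q x \<in> states A)
     \<and> final A \<subseteq> states A
     \<and> inj_on (enc A) (states A)"

definition dfa_lang :: "('q, 'a) enc_dfa \<Rightarrow> 'a list set" where
  "dfa_lang A = {w. foldl (delta A) (init A) w \<in> final A}"

text \<open>Space complexity at n is sup of encoding lengths; "bounded by c" means every
  state encoding has length at most c.\<close>
definition space_le :: "('q, 'a) enc_dfa \<Rightarrow> nat \<Rightarrow> bool" where
  "space_le A c \<longleftrightarrow> (\<forall>q\<in>states A. length (enc A q) \<le> c)"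

definition sliding_window_alg :: "'a \<Rightarrow> 'a list set \<Rightarrow> (nat \<Rightarrow> ('q, 'a) enc_dfa) \<Rightarrow> bool" where
  "sliding_window_alg a L As \<longleftrightarrow>
     (\<forall>n. wf_enc_dfa (As n) \<and> dfa_lang (As n) = window_lang a L n)"

text \<open>States are taken from nat, which
  is no restriction since an injective encoding into bit strings forces countability.\<close>
definition F_O1 :: "'a \<Rightarrow> 'a list set \<Rightarrow> bool" where
  "F_O1 a L \<longleftrightarrow> (\<exists>As :: nat \<Rightarrow> (nat, 'a) enc_dfa. sliding_window_alg a L As
       \<and> (\<exists>c N. \<forall>n\<ge>N. space_le (As n) c))"

end

theory Submission
  imports Defs "HOL-Library.Countable"
begin

lemma length_last_n[simp]: "length (last_n a k w) = k"
  by (simp add: last_n_def)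

lemma last_n_append_long:
  assumes "n \<le> length z" shows "last_n a n (x @ z) = last_n a n z"
  using assms by (simp add: last_n_def)

lemma last_n_rep: "last_n a n (replicate m a @ w) = last_n a n w"
  by (auto simp: last_n_def replicate_add[symmetric] drop_append)

lemma last_n_drop: "last_n a k w = drop (length w) (replicate k a @ w)"
  by (auto simp: last_n_def drop_append)

lemma last_n_snoc: "last_n a k (last_n a k w @ [x]) = last_n a k (w @ [x])"
proof (cases "k \<le> length w")
  case True
  then show ?thesis by (auto simp: last_n_def Suc_diff_le)
next
  case False
  then show ?thesis
    by (cases "k = Suc (length w)") (auto simp: last_n_def drop_append Suc_diff_le)
qed

lemma suffix_testable_large:
  assumes "n \<le> k" shows "suffix_testable k (window_lang a L n)"
  using assms by (simp add: suffix_testable_def window_lang_def last_n_append_long)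

lemma foldl_in_states:
  "wf_enc_dfa A \<Longrightarrow> p \<in> states A \<Longrightarrow> foldl (delta A) p w \<in> states A"
  by (induction w arbitrary: p) (auto simp: wf_enc_dfa_def)

lemma foldl_pow: "foldl d s v = s \<Longrightarrow> foldl d s (concat (replicate t v)) = s"
  by (induction t) auto

lemma foldl_pump:
  assumes "foldl d (foldl d p u) v = foldl d p u"
  shows "foldl d p (u @ v @ w) = foldl d p (u @ concat (replicate t v) @ w)"
  using assms foldl_pow[OF assms] by simp

lemma const_dfa_testable:
  fixes A :: "('q, 'a) enc_dfa" and L :: "'a list set"
  assumes wf: "wf_enc_dfa A" and fin: "finite (states A)" and cB: "card (states A) \<le> B"
    and lang: "dfa_lang A = window_lang a L n" and kB: "B * B \<le> k"
  shows "suffix_testable k (window_lang a L n)"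
  unfolding suffix_testable_def
proof (intro allI impI)
  fix x y z :: "'a list" assume lz: "length z = k"
  let ?d = "delta A"
  define p where "p = foldl ?d (init A) x"
  define q where "q = foldl ?d (init A) y"
  have ps: "p \<in> states A" "q \<in> states A"
    using wf foldl_in_states[OF wf] unfolding p_def q_def wf_enc_dfa_def by auto
  define f where "f i = (foldl ?d p (take i z), foldl ?d q (take i z))" for i
  have fS: "f ` {0..k} \<subseteq> states A \<times> states A"
    using foldl_in_states[OF wf] ps by (auto simp: f_def)
  have "card (states A \<times> states A) \<le> B * B"
    using cB by (simp add: card_cartesian_product mult_le_mono)
  hence "card (states A \<times> states A) < card {0..k}" using kB by simp
  hence "\<not> inj_on f {0..k}"
    using card_inj_on_le[OF _ fS] fin by (meson finite_SigmaI leD)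
  then obtain i j where ij: "i < j" "j \<le> k" "f i = f j"
    unfolding inj_on_def by (metis atLeastAtMost_iff linorder_neqE_nat)
  define u where "u = take i z"
  define v where "v = drop i (take j z)"
  define w where "w = drop j z"
  have tj: "take j z = u @ v" unfolding u_def v_def using ij
    by (metis append_take_drop_id min.absorb1 less_imp_le take_take)
  have zd: "z = u @ v @ w" using tj unfolding w_def by (metis append.assoc append_take_drop_id)
  have lv: "length v = j - i" using ij lz by (simp add: v_def)
  define Z where "Z = u @ concat (replicate n v) @ w"
  have "n \<le> n * length v" using lv ij by (simp add: Suc_le_eq)
  moreover have "length Z = length u + n * length v + length w"
    by (simp add: Z_def length_concat sum_list_replicate)
  ultimately have lZ: "n \<le> length Z" by linarith
  have fp: "foldl ?d (foldl ?d p u) v = foldl ?d p u" and fq: "foldl ?d (foldl ?d q u) v = foldl ?d q u"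
    using ij(3) tj by (auto simp: f_def u_def[symmetric])
  have K: "s @ r \<in> window_lang a L n \<longleftrightarrow> foldl ?d (foldl ?d (init A) s) r \<in> final A" for s r
    using lang[symmetric] unfolding dfa_lang_def by simp
  have "x @ z \<in> window_lang a L n \<longleftrightarrow> x @ Z \<in> window_lang a L n"
    unfolding K p_def[symmetric] zd Z_def using foldl_pump[OF fp] by simp
  also have "\<dots> \<longleftrightarrow> y @ Z \<in> window_lang a L n"
    by (simp add: window_lang_def last_n_append_long[OF lZ])
  also have "\<dots> \<longleftrightarrow> y @ z \<in> window_lang a L n"
    unfolding K q_def[symmetric] zd Z_def using foldl_pump[OF fq] by simp
  finally show "x @ z \<in> window_lang a L n \<longleftrightarrow> y @ z \<in> window_lang a L n" .
qed

lemma fwd: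
  fixes a :: "'a::finite" and L :: "'a list set"
  assumes "F_O1 a L" shows "\<exists>k. \<forall>n. suffix_testable k (window_lang a L n)"
proof -
  obtain As :: "nat \<Rightarrow> (nat, 'a) enc_dfa" and c N where
    sw: "sliding_window_alg a L As" and sp: "\<forall>n\<ge>N. space_le (As n) c"
    using assms unfolding F_O1_def by blast
  define S where "S = {xs :: bool list. set xs \<subseteq> UNIV \<and> length xs \<le> c}"
  have finS: "finite S" unfolding S_def by (rule finite_lists_length_le) simp
  define B where "B = card S"
  have "suffix_testable (N + B * B) (window_lang a L n)" for n
  proof (cases "n < N")
    case True thus ?thesis by (intro suffix_testable_large) simp
  next
    case False
    have wf: "wf_enc_dfa (As n)" and lang: "dfa_lang (As n) = window_lang a L n"
      using sw unfolding sliding_window_alg_def by auto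
    have inj: "inj_on (enc (As n)) (states (As n))" using wf unfolding wf_enc_dfa_def by auto
    have sub: "enc (As n) ` states (As n) \<subseteq> S"
      using sp False unfolding space_le_def S_def by auto
    have fin: "finite (states (As n))"
      using finite_imageD[OF finite_subset[OF sub finS] inj] .
    have "card (states (As n)) \<le> B"
      unfolding B_def using card_inj_on_le[OF inj sub finS] .
    thus ?thesis by (intro const_dfa_testable[OF wf fin _ lang]) auto
  qed
  thus ?thesis by blast
qed

lemma bwd:
  fixes a :: "'a::finite" and L :: "'a list set"
  assumes "\<forall>n. suffix_testable k (window_lang a L n)" shows "F_O1 a L"
proof -
  define W where "W = {w :: 'a list. set w \<subseteq> UNIV \<and> length w = k}"
  have finW: "finite W" unfolding W_def by (rule finite_lists_length_eq) simp
  define St where "St = (to_nat :: 'a list \<Rightarrow> nat) ` W"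
  define As :: "nat \<Rightarrow> (nat, 'a) enc_dfa" where "As n =
     \<lparr> states = St, init = to_nat (replicate k a),
       delta = (\<lambda>q x. to_nat (last_n a k ((from_nat q :: 'a list) @ [x]))),
       final = {q \<in> St. (from_nat q :: 'a list) \<in> window_lang a L n},
       enc = (\<lambda>q. replicate q True) \<rparr>" for n
  have lnW: "last_n a k w \<in> W" for w by (simp add: W_def)
  have run: "foldl (delta (As n)) (init (As n)) w = to_nat (last_n a k w)" for n w
  proof (induction w rule: rev_induct)
    case Nil thus ?case by (simp add: As_def last_n_def)
  next
    case (snoc x w) thus ?case by (simp add: As_def last_n_snoc)
  qed
  have mem: "w \<in> window_lang a L n \<longleftrightarrow> last_n a k w \<in> window_lang a L n" for n w
  proof -
    have e: "replicate k a @ w = take (length w) (replicate k a @ w) @ last_n a k w"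
      unfolding last_n_drop by (rule append_take_drop_id[symmetric])
    have "w \<in> window_lang a L n \<longleftrightarrow> replicate k a @ w \<in> window_lang a L n"
      by (simp add: window_lang_def last_n_rep)
    also have "\<dots> \<longleftrightarrow> [] @ last_n a k w \<in> window_lang a L n"
      using assms unfolding suffix_testable_def by (subst e) (meson length_last_n)
    finally show ?thesis by simp
  qed
  have sw: "sliding_window_alg a L As"
    unfolding sliding_window_alg_def
  proof
    fix n
    show "wf_enc_dfa (As n) \<and> dfa_lang (As n) = window_lang a L n"
    proof
      show "wf_enc_dfa (As n)"
        unfolding wf_enc_dfa_def As_def St_def using lnW
        by (auto simp: W_def inj_on_def)
      show "dfa_lang (As n) = window_lang a L n"
        unfolding dfa_lang_def run using mem by (auto simp: As_def St_def lnW)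
    qed
  qed
  have "space_le (As n) (Max St)" for n
    unfolding space_le_def As_def using finW by (simp add: St_def)
  thus ?thesis unfolding F_O1_def using sw by blast
qed

theorem corollary6p4:
  fixes a :: "'a::finite" and L :: "'a list set"
  shows "F_O1 a L \<longleftrightarrow> (\<exists>k. \<forall>n. suffix_testable k (window_lang a L n))"
  using fwd bwd by blast

end
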